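(* Index the coordinates of $\mathbb{R}^9$ by $1,\dots,9$. Let $\mathcal{S}$ be the following family of $18$ four-element subsets of $\{1,\dots,9\}$: $\{1,2,4,5\}$, $\{1,2,6,9\}$, $\{1,2,7,8\}$, $\{1,3,4,6\}$, $\{1,3,5,8\}$, $\{1,3,7,9\}$, $\{1,4,8,9\}$, $\{1,5,6,7\}$, $\{2,3,4,7\}$, $\{2,3,5,6\}$, $\{2,3,8,9\}$, $\{2,4,6,8\}$, $\{2,5,7,9\}$, $\{3,4,5,9\}$, $\{3,6,7,8\}$, $\{4,5,7,8\}$, $\{4,6,7,9\}$, $\{5,6,8,9\}$. Let $C\subset\mathbb{R}^9$ consist of the $18$ vectors $\pm 2e_j$ ($j=1,\dots,9$, $e_j$ the standard basis vectors) together with the $288$ vectors having entries $\pm1$ (arbitrary signs) on the coordinates of some $S\in\mathcal{S}$ and $0$ elsewhere; so $|C|=306$. Let $\sigma:\mathbb{R}^9\to\mathbb{R}^9$ be the coordinate permutation swapping coordinates $2$ and $3$ and swapping coordinates $4$ and $7$ (fixing the others). Let $C'=\bigl(C\setminus\{x\in C: x_1=1\}\bigr)\cup\{\sigma(x): x\in C,\ x_1=1\}$. Then $C$ and $C'$ are both kissing configurations of $306$ points in $\mathbb{R}^9$, and they are not isometric. In particular, there are at least two non-isometric kissing configurations of $306$ points in nine dimensions.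
   Context: A kissing configuration in $\mathbb{R}^n$ is a finite set of vectors all of the same norm $r>0$ such that any two distinct vectors have inner product at most $r^2/2$ (angle at least $\pi/3$); here all vectors have squared norm $4$, so distinct vectors must have inner product at most $2$. Two configurations are isometric if some orthogonal transformation of $\mathbb{R}^n$ maps one onto the other. *)

theory Defs
  imports "HOL-Analysis.Analysis" "HOL-Library.Numeral_Type"
begin

text \<open>Vectors in R^9 are \<open>real^9\<close>. The paper's coordinate i (1..9) is the
  component \<open>x $ of_nat i\<close>; \<open>of_nat\<close> maps 1..9 bijectively onto the index type 9.\<close>

abbreviation coord :: "real^9 \<Rightarrow> nat \<Rightarrow> real" where
  "coord x i \<equiv> x $ (of_nat i :: 9)"

definition kissing_configuration :: "'a::real_inner set \<Rightarrow> bool" where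
  "kissing_configuration X \<longleftrightarrow> finite X \<and>
     (\<exists>r>0. (\<forall>x\<in>X. norm x = r) \<and>
            (\<forall>x\<in>X. \<forall>y\<in>X. x \<noteq> y \<longrightarrow> inner x y \<le> r\<^sup>2 / 2))"

definition isometric_configs :: "'a::euclidean_space set \<Rightarrow> 'a set \<Rightarrow> bool" where
  "isometric_configs X Y \<longleftrightarrow> (\<exists>f. orthogonal_transformation f \<and> f ` X = Y)"

definition fam :: "nat set set" where
  "fam = {{1,2,4,5}, {1,2,6,9}, {1,2,7,8}, {1,3,4,6}, {1,3,5,8}, {1,3,7,9},
          {1,4,8,9}, {1,5,6,7}, {2,3,4,7}, {2,3,5,6}, {2,3,8,9}, {2,4,6,8},
          {2,5,7,9}, {3,4,5,9}, {3,6,7,8}, {4,5,7,8}, {4,6,7,9}, {5,6,8,9}}"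

definition confC :: "(real^9) set" where
  "confC = {x. (\<exists>j\<in>{1..9}. \<exists>s\<in>{-2, 2}. \<forall>i\<in>{1..9}. coord x i = (if i = j then s else 0))
             \<or> (\<exists>S\<in>fam. \<forall>i\<in>{1..9}. if i \<in> S then \<bar>coord x i\<bar> = 1 else coord x i = 0)}"

definition swap9 :: "9 \<Rightarrow> 9" where
  "swap9 k = (if k = of_nat 2 then of_nat 3 else if k = of_nat 3 then of_nat 2
              else if k = of_nat 4 then of_nat 7 else if k = of_nat 7 then of_nat 4 else k)"

definition sigma9 :: "real^9 \<Rightarrow> real^9" where
  "sigma9 x = (\<chi> k. x $ swap9 k)"

definition confC' :: "(real^9) set" where
  "confC' = (confC - {x \<in> confC. coord x 1 = 1}) \<union> sigma9 ` {x \<in> confC. coord x 1 = 1}"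

end

theory Submission
  imports Defs
begin


lemma nine: "{1..9::nat} = {1,2,3,4,5,6,7,8,9}" by auto

lemma idx_inj: "inj_on (of_nat :: nat \<Rightarrow> 9) {1..9}"
  unfolding nine inj_on_def by simp

lemma idx_surj: "(of_nat :: nat \<Rightarrow> 9) ` {1..9} = UNIV"
proof -
  have "card ((of_nat::nat\<Rightarrow>9) ` {1..9}) = CARD(9)"
    using card_image[OF idx_inj] by simp
  then show ?thesis by (intro card_eq_UNIV_imp_eq_UNIV) simp_all
qed

lemma inner9: "inner x y = (\<Sum>i\<in>{1..9}. coord x i * coord y i)" for x y :: "real^9"
proof -
  have "inner x y = (\<Sum>k\<in>UNIV. x$k * y$k)" by (simp add: inner_vec_def)
  also have "\<dots> = (\<Sum>k\<in>(of_nat::nat\<Rightarrow>9)`{1..9}. x$k*y$k)" by (simp only: idx_surj)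
  also have "\<dots> = (\<Sum>i\<in>{1..9}. coord x i * coord y i)" by (simp only: sum.reindex[OF idx_inj] comp_def)
  finally show ?thesis .
qed

lemma vec9_eq: "x = y \<longleftrightarrow> (\<forall>i\<in>{1..9}. coord x i = coord y i)" for x y :: "real^9"
proof
  assume R: "\<forall>i\<in>{1..9}. coord x i = coord y i"
  show "x = y" unfolding vec_eq_iff
  proof
    fix k :: 9
    have "k \<in> (of_nat::nat\<Rightarrow>9) ` {1..9}" by (simp only: idx_surj UNIV_I)
    then obtain i where "i \<in> {1..9}" "k = of_nat i" by blast
    then show "x $ k = y $ k" using R by simp
  qed
qed simp

definition mkv :: "(nat \<Rightarrow> real) \<Rightarrow> real^9" where
  "mkv f = (\<chi> k. f (inv_into {1..9} (of_nat :: nat \<Rightarrow> 9) k))"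

lemma coord_mkv: assumes "i \<in> {1..9}" shows "coord (mkv f) i = f i"
proof -
  have "inv_into {1..9} (of_nat :: nat \<Rightarrow> 9) (of_nat i) = i" by (rule inv_into_f_f[OF idx_inj assms])
  then show ?thesis by (simp add: mkv_def)
qed

definition tau :: "nat \<Rightarrow> nat" where
  "tau i = (if i=2 then 3 else if i=3 then 2 else if i=4 then 7 else if i=7 then 4 else i)"

lemma tau_tau[simp]: "tau (tau i) = i" by (simp add: tau_def)
lemma tau_range: "i \<in> {1..9} \<Longrightarrow> tau i \<in> {1..9}" by (auto simp: tau_def)
lemma tau1[simp]: "tau 1 = 1" by (simp add: tau_def)
lemma tau_inj: "inj tau" by (metis injI tau_tau)
lemma tau_img: "tau ` {1..9} = {1..9}"
proof
  show "tau ` {1..9} \<subseteq> {1..9}" using tau_range by auto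
  show "{1..9} \<subseteq> tau ` {1..9}"
  proof
    fix i :: nat assume "i \<in> {1..9}"
    then have "tau i \<in> {1..9}" by (rule tau_range)
    then show "i \<in> tau ` {1..9}" by (metis image_eqI tau_tau)
  qed
qed

lemma swap_idx: "i \<in> {1..9} \<Longrightarrow> swap9 (of_nat i) = of_nat (tau i)"
  unfolding nine by (auto simp: swap9_def tau_def)

lemma coord_sigma: "i \<in> {1..9} \<Longrightarrow> coord (sigma9 x) i = coord x (tau i)"
  by (simp add: sigma9_def swap_idx)

lemma inner_sigma: "inner (sigma9 x) (sigma9 y) = inner x y"
proof -
  have "inner (sigma9 x) (sigma9 y) = (\<Sum>i\<in>{1..9}. coord x (tau i) * coord y (tau i))"
    by (simp add: inner9 coord_sigma)
  also have "\<dots> = (\<Sum>i\<in>tau`{1..9}. coord x i * coord y i)"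
    by (simp add: sum.reindex inj_on_subset[OF tau_inj])
  also have "\<dots> = inner x y" by (simp only: tau_img inner9)
  finally show ?thesis .
qed

lemma sigma_sigma[simp]: "sigma9 (sigma9 x) = x"
  unfolding vec9_eq
proof
  fix i :: nat assume i: "i \<in> {1..9}"
  have "coord (sigma9 (sigma9 x)) i = coord (sigma9 x) (tau i)" by (rule coord_sigma[OF i])
  also have "\<dots> = coord x (tau (tau i))" by (rule coord_sigma[OF tau_range[OF i]])
  finally show "coord (sigma9 (sigma9 x)) i = coord x i" by simp
qed

lemma sigma_inj: "inj sigma9" by (metis injI sigma_sigma)

lemma coord_sigma1[simp]: "sigma9 x $ 1 = x $ 1"
  using coord_sigma[of 1 x] by (simp add: tau_def)



definition Aset :: "(real^9) set" where
  "Aset = {x. \<exists>j\<in>{1..9}. \<exists>s\<in>{-2, 2}. \<forall>i\<in>{1..9}. coord x i = (if i = j then s else 0)}"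

definition Bset :: "nat set \<Rightarrow> (real^9) set" where
  "Bset S = {x. \<forall>i\<in>{1..9}. if i \<in> S then \<bar>coord x i\<bar> = 1 else coord x i = 0}"

lemma confC_eq: "confC = Aset \<union> \<Union>(Bset ` fam)"
  unfolding confC_def Aset_def Bset_def by blast

lemma fam_props: "\<forall>S\<in>fam. S \<subseteq> {1..9} \<and> card S = 4"
  by (simp add: fam_def)

lemma B_bound: "x \<in> Bset S \<Longrightarrow> i \<in> {1..9} \<Longrightarrow> \<bar>coord x i\<bar> \<le> 1"
  unfolding Bset_def by (cases "i \<in> S") auto

lemma inner_B:
  assumes "x \<in> Bset S" "S \<subseteq> {1..9}"
  shows "inner x y = (\<Sum>i\<in>S. coord x i * coord y i)"
proof -
  have "inner x y = (\<Sum>i\<in>{1..9}. coord x i * coord y i)" by (rule inner9)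
  also have "\<dots> = (\<Sum>i\<in>S. coord x i * coord y i)"
    by (rule sum.mono_neutral_right) (use assms in \<open>auto simp: Bset_def\<close>)
  finally show ?thesis .
qed

lemma LBsmall:
  assumes x: "x \<in> Bset S" and y: "y \<in> Bset U" and S: "S \<subseteq> {1..9}" and c: "card (S \<inter> U) \<le> 2"
  shows "inner x y \<le> 2"
proof -
  have fS: "finite S" using S finite_subset by blast
  have "inner x y = (\<Sum>i\<in>S. coord x i * coord y i)" by (rule inner_B[OF x S])
  also have "\<dots> = (\<Sum>i\<in>S \<inter> U. coord x i * coord y i)"
  proof (rule sum.mono_neutral_right)
    have "\<forall>i\<in>S. i \<notin> U \<longrightarrow> coord y i = 0" using y S unfolding Bset_def by auto
    then show "\<forall>i\<in>S - S \<inter> U. coord x i * coord y i = 0" by auto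
  qed (use fS in auto)
  also have "\<dots> \<le> (\<Sum>i\<in>S \<inter> U. 1)"
  proof (rule sum_mono)
    fix i assume "i \<in> S \<inter> U"
    then have "\<bar>coord x i\<bar> = 1" "\<bar>coord y i\<bar> = 1" using x y S by (auto simp: Bset_def)
    then show "coord x i * coord y i \<le> 1" by (metis abs_mult abs_le_iff order_refl mult_1)
  qed
  also have "\<dots> = real (card (S \<inter> U))" by simp
  also have "\<dots> \<le> 2" using c by simp
  finally show ?thesis .
qed

lemma Lminus:
  assumes x: "x \<in> Bset S" and S: "S \<subseteq> {1..9}" "card S = 4" and i0: "i0 \<in> S"
    and m: "coord x i0 * coord y i0 = -1" and yb: "\<forall>i\<in>{1..9}. \<bar>coord y i\<bar> \<le> 1"
  shows "inner x y \<le> 2"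
proof -
  have fS: "finite S" using S finite_subset by blast
  have "inner x y = (\<Sum>i\<in>S. coord x i * coord y i)" by (rule inner_B[OF x S(1)])
  also have "\<dots> = coord x i0 * coord y i0 + (\<Sum>i\<in>S - {i0}. coord x i * coord y i)"
    using fS i0 by (simp add: sum.remove)
  also have "(\<Sum>i\<in>S - {i0}. coord x i * coord y i) \<le> (\<Sum>i\<in>S - {i0}. 1)"
  proof (rule sum_mono)
    fix i assume "i \<in> S - {i0}"
    then have "\<bar>coord x i\<bar> = 1" "\<bar>coord y i\<bar> \<le> 1" using x yb S by (auto simp: Bset_def)
    then have "\<bar>coord x i * coord y i\<bar> \<le> 1" by (simp add: abs_mult)
    then show "coord x i * coord y i \<le> 1" by linarith
  qed
  also have "(\<Sum>i\<in>S - {i0}. (1::real)) = 3" using fS i0 S by simp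
  finally show ?thesis using m by linarith
qed

lemma LBsame:
  assumes x: "x \<in> Bset S" and y: "y \<in> Bset S" and S: "S \<subseteq> {1..9}" "card S = 4" and ne: "x \<noteq> y"
  shows "inner x y \<le> 2"
proof -
  obtain i0 where i0: "i0 \<in> {1..9}" "coord x i0 \<noteq> coord y i0" using ne vec9_eq by blast
  have "\<forall>i\<in>{1..9}. i \<notin> S \<longrightarrow> coord x i = 0 \<and> coord y i = 0" using x y unfolding Bset_def by auto
  then have iS: "i0 \<in> S" using i0 by auto
  have "\<bar>coord x i0\<bar> = 1" "\<bar>coord y i0\<bar> = 1" using iS i0 x y by (auto simp: Bset_def)
  with i0(2) have "coord x i0 * coord y i0 = -1" by (auto simp: abs_if split: if_splits)
  moreover have "\<forall>i\<in>{1..9}. \<bar>coord y i\<bar> \<le> 1" using B_bound[OF y] by blast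
  ultimately show ?thesis using Lminus[OF x S iS] by blast
qed

lemma A_inner:
  assumes x: "x \<in> Aset"
  obtains j s where "j \<in> {1..9}" "s \<in> {-2,2}" "\<And>y. inner x y = s * coord y j"
    "\<forall>i\<in>{1..9}. coord x i = (if i = j then s else 0)"
proof -
  obtain j s where j: "j \<in> {1..9}" "s \<in> {-2,2}" and c: "\<forall>i\<in>{1..9}. coord x i = (if i = j then s else 0)"
    using x unfolding Aset_def by blast
  have "inner x y = s * coord y j" for y
  proof -
    have "inner x y = (\<Sum>i\<in>{1..9}. (if i = j then s * coord y i else 0))"
      unfolding inner9 by (rule sum.cong) (use c in auto)
    also have "\<dots> = s * coord y j" using j by (simp add: sum.delta)
    finally show ?thesis .
  qed
  with j c that show ?thesis by blast
qed

lemma LA: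
  assumes x: "x \<in> Aset" and yb: "\<forall>i\<in>{1..9}. \<bar>coord y i\<bar> \<le> 1"
  shows "inner x y \<le> 2"
proof -
  obtain j s where j: "j \<in> {1..9}" "s \<in> {-2,2}" and e: "\<And>y. inner x y = s * coord y j"
    and cx: "\<forall>i\<in>{1..9}. coord x i = (if i = j then s else 0)"
    using A_inner[OF x] by metis
  have b: "\<bar>coord y j\<bar> \<le> 1" using yb j by blast
  from j(2) have "s = -2 \<or> s = 2" by simp
  then have "s * coord y j \<le> 2"
  proof
    assume "s = -2" then show ?thesis using b by (simp add: abs_le_iff)
  next
    assume "s = 2" then show ?thesis using b by (simp add: abs_le_iff)
  qed
  then show ?thesis using e[of y] by simp
qed

lemma LAA:
  assumes x: "x \<in> Aset" and y: "y \<in> Aset" and ne: "x \<noteq> y"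
  shows "inner x y \<le> 2"
proof -
  obtain j s where j: "j \<in> {1..9}" "s \<in> {-2,2}" and e: "\<And>y. inner x y = s * coord y j"
    and cx: "\<forall>i\<in>{1..9}. coord x i = (if i = j then s else 0)"
    using A_inner[OF x] by metis
  obtain j' s' where j': "j' \<in> {1..9}" "s' \<in> {-2,2}"
    and cy: "\<forall>i\<in>{1..9}. coord y i = (if i = j' then s' else 0)"
    using y unfolding Aset_def by blast
  have nn: "\<not> (j = j' \<and> s = s')"
  proof
    assume "j = j' \<and> s = s'"
    then have "\<forall>i\<in>{1..9}. coord x i = coord y i" using cx cy by simp
    then show False using ne vec9_eq by blast
  qed
  have cj: "coord y j = (if j = j' then s' else 0)" using cy j by blast
  show ?thesis
  proof (cases "j = j'")
    case True
    then have "s \<noteq> s'" using nn by blast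
    then have "s * s' = -4" using j(2) j'(2) by auto
    then show ?thesis using e[of y] cj True by simp
  next
    case False
    then show ?thesis using e[of y] cj by simp
  qed
qed

lemma norm_A: assumes x: "x \<in> Aset" shows "inner x x = 4"
proof -
  obtain j s where j: "j \<in> {1..9}" "s \<in> {-2,2}" and e: "\<And>y. inner x y = s * coord y j"
    and cx: "\<forall>i\<in>{1..9}. coord x i = (if i = j then s else 0)"
    using A_inner[OF x] by metis
  have "coord x j = s" using cx j by simp
  then have "inner x x = s * s" using e[of x] by simp
  then show ?thesis using j(2) by auto
qed

lemma norm_B: assumes x: "x \<in> Bset S" and S: "S \<subseteq> {1..9}" "card S = 4"
  shows "inner x x = 4"
proof -
  have "inner x x = (\<Sum>i\<in>S. coord x i * coord x i)" by (rule inner_B[OF x S(1)])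
  also have "\<dots> = (\<Sum>i\<in>S. 1)"
  proof (rule sum.cong)
    fix i assume "i \<in> S"
    then have "\<bar>coord x i\<bar> = 1" using x S by (auto simp: Bset_def)
    then show "coord x i * coord x i = 1" by (metis abs_mult_self_eq mult_1)
  qed simp
  finally show ?thesis using S by simp
qed



lemma fam_int: "\<forall>S\<in>fam. \<forall>T\<in>fam. S \<noteq> T \<longrightarrow> card (S \<inter> T) \<le> 2"
  by (simp add: fam_def)

lemma fam_tau: "\<forall>S\<in>fam. \<forall>T\<in>fam. 1 \<notin> S \<longrightarrow> 1 \<in> T \<longrightarrow> card (S \<inter> tau ` T) \<le> 2"
  by (simp add: fam_def tau_def)

lemma fam_no1357: "\<forall>S\<in>fam. \<not> {1,3,5,7} \<subseteq> S"
  by (simp add: fam_def)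

lemma fam_fin: "finite fam" by (simp add: fam_def)

lemma fam_card: "card fam = 18"
proof -
  have "card ((\<lambda>S. \<Sum>i\<in>S. (2::nat)^i) ` fam) = 18" by (simp add: fam_def)
  moreover have "card ((\<lambda>S. \<Sum>i\<in>S. (2::nat)^i) ` fam) \<le> card fam"
    by (rule card_image_le[OF fam_fin])
  moreover have "card fam \<le> 18"
  proof -
    have "fam = set [{1,2,4,5}, {1,2,6,9}, {1,2,7,8}, {1,3,4,6}, {1,3,5,8}, {1,3,7,9},
          {1,4,8,9}, {1,5,6,7}, {2,3,4,7}, {2,3,5,6}, {2,3,8,9}, {2,4,6,8},
          {2,5,7,9}, {3,4,5,9}, {3,6,7,8}, {4,5,7,8}, {4,6,7,9}, {5,6,8,9}]"
      unfolding fam_def by (simp only: list.set)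
    then have "card fam \<le> length [{1::nat,2,4,5}, {1,2,6,9}, {1,2,7,8}, {1,3,4,6}, {1,3,5,8}, {1,3,7,9},
          {1,4,8,9}, {1,5,6,7}, {2,3,4,7}, {2,3,5,6}, {2,3,8,9}, {2,4,6,8},
          {2,5,7,9}, {3,4,5,9}, {3,6,7,8}, {4,5,7,8}, {4,6,7,9}, {5,6,8,9}]"
      by (metis card_length)
    then show ?thesis by (simp only: list.size)
  qed
  ultimately show ?thesis by linarith
qed

lemma B_bound': "x \<in> Bset S \<Longrightarrow> \<forall>i\<in>{1..9}. \<bar>coord x i\<bar> \<le> 1"
  using B_bound by blast

lemma C_norm: "x \<in> confC \<Longrightarrow> inner x x = 4"
  unfolding confC_eq using norm_A norm_B fam_props by blast

lemma C_pair:
  assumes x: "x \<in> confC" and y: "y \<in> confC" and ne: "x \<noteq> y"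
  shows "inner x y \<le> 2"
proof -
  consider (AA) "x \<in> Aset" "y \<in> Aset" | (AB) T where "x \<in> Aset" "T \<in> fam" "y \<in> Bset T"
    | (BA) S where "S \<in> fam" "x \<in> Bset S" "y \<in> Aset"
    | (BB) S T where "S \<in> fam" "x \<in> Bset S" "T \<in> fam" "y \<in> Bset T"
    using x y unfolding confC_eq by blast
  then show ?thesis
  proof cases
    case AA then show ?thesis using LAA ne by blast
  next
    case (AB T) then show ?thesis using LA B_bound' by blast
  next
    case (BA S) then show ?thesis using LA B_bound' inner_commute by metis
  next
    case (BB S T)
    show ?thesis
    proof (cases "S = T")
      case True then show ?thesis using BB LBsame fam_props ne by metis
    next
      case False then show ?thesis using BB LBsmall fam_props fam_int by metis
    qed
  qed
qed

lemma kiss_intro: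
  assumes "finite X" "\<forall>x\<in>X. inner x x = (4::real)" "\<forall>x\<in>X. \<forall>y\<in>X. x \<noteq> y \<longrightarrow> inner x y \<le> 2"
  shows "kissing_configuration X"
  unfolding kissing_configuration_def
proof (intro conjI exI[of _ 2])
  show "\<forall>x\<in>X. norm x = 2" using assms(2) by (simp add: norm_eq_sqrt_inner)
qed (use assms in auto)



definition amk :: "nat \<times> real \<Rightarrow> real^9" where
  "amk p = mkv (\<lambda>i. if i = fst p then snd p else 0)"

lemma A_img: "Aset = amk ` ({1..9} \<times> {-2,2})"
proof
  show "Aset \<subseteq> amk ` ({1..9} \<times> {-2,2})"
  proof
    fix x assume "x \<in> Aset"
    then obtain j s where j: "j \<in> {1..9}" "s \<in> {-2,2}" and c: "\<forall>i\<in>{1..9}. coord x i = (if i = j then s else 0)"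
      unfolding Aset_def by blast
    have "x = amk (j, s)" unfolding vec9_eq amk_def using c by (simp add: coord_mkv)
    then show "x \<in> amk ` ({1..9} \<times> {-2,2})" using j by blast
  qed
  show "amk ` ({1..9} \<times> {-2,2}) \<subseteq> Aset"
  proof
    fix x assume "x \<in> amk ` ({1..9} \<times> {-2,2})"
    then obtain j s where j: "j \<in> {1..9}" "s \<in> {-2,2}" and xe: "x = amk (j, s)" by blast
    have "\<forall>i\<in>{1..9}. coord x i = (if i = j then s else 0)" using xe by (simp add: amk_def coord_mkv)
    then show "x \<in> Aset" unfolding Aset_def using j by blast
  qed
qed

lemma A_inj: "inj_on amk ({1..9} \<times> {-2,2})"
proof (rule inj_onI)
  fix p q assume p: "p \<in> {1..9} \<times> {-2::real,2}" and q: "q \<in> {1..9} \<times> {-2::real,2}" and e: "amk p = amk q"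
  have "coord (amk p) (fst p) = coord (amk q) (fst p)" using e by simp
  then have "snd p = (if fst p = fst q then snd q else 0)" using p by (simp add: amk_def coord_mkv mem_Times_iff)
  moreover have "snd p \<noteq> 0" using p by auto
  ultimately show "p = q" by (metis prod_eq_iff)
qed

lemma A_card: "card Aset = 18" and A_fin: "finite Aset"
proof -
  have "card Aset = card ({1..9::nat} \<times> {-2,2::real})" unfolding A_img by (rule card_image[OF A_inj])
  also have "\<dots> = 18" by (simp add: card_cartesian_product)
  finally show "card Aset = 18" .
  show "finite Aset" unfolding A_img by simp
qed

definition bmk :: "nat set \<Rightarrow> (nat \<Rightarrow> real) \<Rightarrow> real^9" where
  "bmk S g = mkv (\<lambda>i. if i \<in> S then g i else 0)"

lemma B_img: assumes S: "S \<subseteq> {1..9}" shows "Bset S = bmk S ` (PiE S (\<lambda>_. {-1,1}))"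
proof
  show "Bset S \<subseteq> bmk S ` (PiE S (\<lambda>_. {-1,1}))"
  proof
    fix x assume x: "x \<in> Bset S"
    let ?g = "restrict (coord x) S"
    have "?g \<in> PiE S (\<lambda>_. {-1,1})"
    proof
      fix i assume "i \<in> S"
      then have "\<bar>coord x i\<bar> = 1" using x S unfolding Bset_def by auto
      then show "?g i \<in> {-1,1}" using \<open>i \<in> S\<close> by (auto simp: abs_if split: if_splits)
    qed auto
    moreover have "x = bmk S ?g"
      unfolding vec9_eq bmk_def using x unfolding Bset_def by (auto simp: coord_mkv)
    ultimately show "x \<in> bmk S ` (PiE S (\<lambda>_. {-1,1}))" by blast
  qed
  show "bmk S ` (PiE S (\<lambda>_. {-1,1})) \<subseteq> Bset S"
  proof
    fix x assume "x \<in> bmk S ` (PiE S (\<lambda>_. {-1,1}))"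
    then obtain g where g: "g \<in> PiE S (\<lambda>_. {-1,1})" and xg: "x = bmk S g" by blast
    show "x \<in> Bset S" unfolding Bset_def xg bmk_def
    proof (intro CollectI ballI)
      fix i :: nat assume i: "i \<in> {1..9}"
      show "if i \<in> S then \<bar>coord (mkv (\<lambda>i. if i \<in> S then g i else 0)) i\<bar> = 1
            else coord (mkv (\<lambda>i. if i \<in> S then g i else 0)) i = 0"
        using g i by (auto simp: coord_mkv PiE_iff)
    qed
  qed
qed

lemma B_inj: assumes S: "S \<subseteq> {1..9}" shows "inj_on (bmk S) (PiE S (\<lambda>_. {-1,1}))"
proof (rule inj_onI)
  fix f g assume f: "f \<in> PiE S (\<lambda>_. {-1::real,1})" and g: "g \<in> PiE S (\<lambda>_. {-1::real,1})"
    and e: "bmk S f = bmk S g"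
  show "f = g"
  proof (rule PiE_ext[OF f g])
    fix i assume i: "i \<in> S"
    then have i9: "i \<in> {1..9}" using S by blast
    have "coord (bmk S f) i = coord (bmk S g) i" using e by simp
    then show "f i = g i" using i i9 by (simp add: bmk_def coord_mkv)
  qed
qed

lemma B_card: assumes S: "S \<subseteq> {1..9}" "card S = 4" shows "card (Bset S) = 16" and "finite (Bset S)"
proof -
  have fS: "finite S" using S finite_subset by blast
  have "card (Bset S) = card (PiE S (\<lambda>_. {-1::real,1}))" unfolding B_img[OF S(1)] by (rule card_image[OF B_inj[OF S(1)]])
  also have "\<dots> = (\<Prod>i\<in>S. card {-1::real,1})" by (rule card_PiE[OF fS])
  also have "\<dots> = 2 ^ card S" by (simp add: numeral_2_eq_2)
  also have "\<dots> = 16" using S(2) by simp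
  finally show "card (Bset S) = 16" .
  show "finite (Bset S)" unfolding B_img[OF S(1)] using fS by (simp add: finite_PiE)
qed

lemma AB_disj: "Aset \<inter> Bset S = {}"
proof (rule ccontr)
  assume "Aset \<inter> Bset S \<noteq> {}"
  then obtain x where x: "x \<in> Aset" "x \<in> Bset S" by blast
  obtain j s where j: "j \<in> {1..9}" "s \<in> {-2,2}" and c: "\<forall>i\<in>{1..9}. coord x i = (if i = j then s else 0)"
    using x(1) unfolding Aset_def by blast
  have "\<bar>coord x j\<bar> \<le> 1" using B_bound[OF x(2) j(1)] .
  moreover have "coord x j = s" using c j by simp
  ultimately show False using j(2) by auto
qed

lemma BB_disj: assumes ST: "S \<subseteq> {1..9}" "T \<subseteq> {1..9}" "S \<noteq> T" shows "Bset S \<inter> Bset T = {}"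
proof (rule ccontr)
  assume "Bset S \<inter> Bset T \<noteq> {}"
  then obtain x where x: "x \<in> Bset S" "x \<in> Bset T" by blast
  have hS: "\<forall>i\<in>{1..9}. if i\<in>S then \<bar>coord x i\<bar> = 1 else coord x i = 0" using x(1) unfolding Bset_def by blast
  have hT: "\<forall>i\<in>{1..9}. if i\<in>T then \<bar>coord x i\<bar> = 1 else coord x i = 0" using x(2) unfolding Bset_def by blast
  from ST(3) obtain i where i: "(i \<in> S \<and> i \<notin> T) \<or> (i \<in> T \<and> i \<notin> S)" by (meson subsetI subset_antisym)
  then have i9: "i \<in> {1..9}" using ST by blast
  have a: "if i\<in>S then \<bar>coord x i\<bar> = 1 else coord x i = 0" using hS i9 by blast
  have b: "if i\<in>T then \<bar>coord x i\<bar> = 1 else coord x i = 0" using hT i9 by blast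
  from i show False
  proof
    assume "i \<in> S \<and> i \<notin> T" then show False using a b by simp
  next
    assume "i \<in> T \<and> i \<notin> S" then show False using a b by simp
  qed
qed

lemma C_card: "card confC = 306" and C_fin: "finite confC"
proof -
  have finBs: "\<forall>S\<in>fam. finite (Bset S)" using B_card(2) fam_props by blast
  have disj: "\<forall>S\<in>fam. \<forall>T\<in>fam. S \<noteq> T \<longrightarrow> Bset S \<inter> Bset T = {}" using BB_disj fam_props by blast
  have finB: "finite (\<Union>(Bset ` fam))" using fam_fin finBs by blast
  have "card (\<Union>(Bset ` fam)) = (\<Sum>S\<in>fam. card (Bset S))"
    by (rule card_UN_disjoint[OF fam_fin finBs disj])
  also have "\<dots> = (\<Sum>S\<in>fam. 16)" by (rule sum.cong) (use B_card(1) fam_props in auto)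
  also have "\<dots> = 288" using fam_card by simp
  finally have cB': "card (\<Union>(Bset ` fam)) = 288" .
  have "card confC = card Aset + card (\<Union>(Bset ` fam))" unfolding confC_eq
    by (rule card_Un_disjoint[OF A_fin finB]) (use AB_disj in blast)
  then show "card confC = 306" using A_card cB' by simp
  show "finite confC" unfolding confC_eq using A_fin finB by simp
qed



lemma B_at: "x \<in> Bset S \<Longrightarrow> i \<in> {1..9} \<Longrightarrow> (if i\<in>S then \<bar>coord x i\<bar> = 1 else coord x i = 0)"
  unfolding Bset_def by blast

lemma one9: "(1::nat) \<in> {1..9}" by simp

abbreviation "DD \<equiv> {x \<in> confC. coord x 1 = 1}"

lemma confC'_eq: "confC' = (confC - DD) \<union> sigma9 ` DD"
  unfolding confC'_def by simp

lemma D_in_B: assumes "x \<in> confC" "coord x 1 = 1" shows "\<exists>T\<in>fam. 1 \<in> T \<and> x \<in> Bset T"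
proof -
  have "x \<notin> Aset"
  proof
    assume "x \<in> Aset"
    then obtain j s where j: "j \<in> {1..9}" "s \<in> {-2,2}" and c: "\<forall>i\<in>{1..9}. coord x i = (if i = j then s else 0)"
      unfolding Aset_def by blast
    have one: "(1::nat) \<in> {1..9}" by simp
    have "coord x 1 = (if 1 = j then s else 0)" using bspec[OF c one] .
    then show False using assms(2) j(2) by (auto split: if_splits)
  qed
  then obtain T where T: "T \<in> fam" "x \<in> Bset T" using assms(1) unfolding confC_eq by blast
  have "1 \<in> T"
  proof (rule ccontr)
    assume "1 \<notin> T"
    then have "coord x 1 = 0" using B_at[OF T(2) one9] by simp
    then show False using assms(2) by simp
  qed
  then show ?thesis using T by blast
qed

lemma tau_mem: "i \<in> tau ` T \<longleftrightarrow> tau i \<in> T"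
  by (metis image_iff tau_tau)

lemma sigma_B: assumes x: "x \<in> Bset T" shows "sigma9 x \<in> Bset (tau ` T)"
  unfolding Bset_def
proof (intro CollectI ballI)
  fix i :: nat assume i: "i \<in> {1..9}"
  have h: "if tau i \<in> T then \<bar>coord x (tau i)\<bar> = 1 else coord x (tau i) = 0"
    using x tau_range[OF i] unfolding Bset_def by blast
  show "if i \<in> tau ` T then \<bar>coord (sigma9 x) i\<bar> = 1 else coord (sigma9 x) i = 0"
    using h by (simp add: coord_sigma[OF i] tau_mem)
qed

lemma neg_B: assumes x: "x \<in> Bset T" shows "- x \<in> Bset T"
  using x unfolding Bset_def by simp

lemma neg_A: assumes x: "x \<in> Aset" shows "- x \<in> Aset"
proof -
  obtain j s where j: "j \<in> {1..9}" "s \<in> {-2,2}" and c: "\<forall>i\<in>{1..9}. coord x i = (if i = j then s else 0)"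
    using x unfolding Aset_def by blast
  have "\<forall>i\<in>{1..9}. coord (-x) i = (if i = j then -s else 0)" using c by simp
  moreover have "-s \<in> {-2,2}" using j(2) by auto
  ultimately show ?thesis unfolding Aset_def using j(1) by blast
qed

lemma neg_C: "x \<in> confC \<Longrightarrow> - x \<in> confC"
  unfolding confC_eq using neg_A neg_B by blast

lemma C'_mixed:
  assumes x: "x \<in> confC - DD" and b: "b \<in> DD"
  shows "inner x (sigma9 b) \<le> 2"
proof -
  obtain T where T: "T \<in> fam" "1 \<in> T" "b \<in> Bset T" using D_in_B b by blast
  let ?y = "sigma9 b"
  have yB: "?y \<in> Bset (tau ` T)" by (rule sigma_B[OF T(3)])
  have yb: "\<forall>i\<in>{1..9}. \<bar>coord ?y i\<bar> \<le> 1" using B_bound'[OF yB] .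
  have y1: "coord ?y 1 = 1" using b by simp
  have x1: "coord x 1 \<noteq> 1" using x by simp
  consider "x \<in> Aset" | S where "S \<in> fam" "x \<in> Bset S" using x unfolding confC_eq by blast
  then show ?thesis
  proof cases
    case 1 then show ?thesis using LA yb by blast
  next
    case (2 S)
    have SP: "S \<subseteq> {1..9}" "card S = 4" using fam_props 2(1) by auto
    show ?thesis
    proof (cases "1 \<in> S")
      case True
      then have "\<bar>coord x 1\<bar> = 1" using B_at[OF 2(2) one9] by simp
      then have "coord x 1 = -1" using x1 by (auto simp: abs_if split: if_splits)
      then have "coord x 1 * coord ?y 1 = -1" using y1 by simp
      then show ?thesis using Lminus[OF 2(2) SP True _ yb] by simp
    next
      case False
      have "card (S \<inter> tau ` T) \<le> 2" using fam_tau 2(1) T(1,2) False by blast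
      then show ?thesis using LBsmall[OF 2(2) yB SP(1)] by simp
    qed
  qed
qed

lemma C'_fin: "finite confC'"
  unfolding confC'_eq using C_fin by simp

lemma C'_card: "card confC' = 306"
proof -
  have fD: "finite DD" using C_fin by simp
  have "card confC' = card (confC - DD) + card (sigma9 ` DD)" unfolding confC'_eq
  proof (rule card_Un_disjoint)
    show "finite (confC - DD)" using C_fin by simp
    show "finite (sigma9 ` DD)" using fD by simp
    show "(confC - DD) \<inter> sigma9 ` DD = {}" by auto
  qed
  also have "card (sigma9 ` DD) = card DD" by (rule card_image[OF inj_on_subset[OF sigma_inj]]) simp
  also have "card (confC - DD) = card confC - card DD" by (rule card_Diff_subset[OF fD]) blast
  also have "card DD \<le> card confC" by (rule card_mono[OF C_fin]) blast
  then have "card confC - card DD + card DD = card confC" by simp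
  finally show ?thesis using C_card by simp
qed

lemma C'_kiss: "kissing_configuration confC'"
proof (rule kiss_intro[OF C'_fin])
  have split: "z \<in> confC - DD \<or> (\<exists>a. a \<in> DD \<and> z = sigma9 a)" if "z \<in> confC'" for z
    using that unfolding confC'_eq by blast
  show "\<forall>x\<in>confC'. inner x x = 4"
  proof
    fix x assume "x \<in> confC'"
    from split[OF this] show "inner x x = 4"
    proof
      assume "x \<in> confC - DD" then show ?thesis using C_norm by blast
    next
      assume "\<exists>a. a \<in> DD \<and> x = sigma9 a"
      then obtain a where a: "a \<in> DD" "x = sigma9 a" by blast
      have "inner x x = inner a a" unfolding a(2) by (rule inner_sigma)
      then show ?thesis using C_norm a(1) by simp
    qed
  qed
  show "\<forall>x\<in>confC'. \<forall>y\<in>confC'. x \<noteq> y \<longrightarrow> inner x y \<le> 2"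
  proof (intro ballI impI)
    fix x y assume x: "x \<in> confC'" and y: "y \<in> confC'" and ne: "x \<noteq> y"
    from split[OF x] show "inner x y \<le> 2"
    proof
      assume xa: "x \<in> confC - DD"
      from split[OF y] show ?thesis
      proof
        assume "y \<in> confC - DD" then show ?thesis using C_pair xa ne by blast
      next
        assume "\<exists>b. b \<in> DD \<and> y = sigma9 b"
        then obtain b where b: "b \<in> DD" "y = sigma9 b" by blast
        show ?thesis unfolding b(2) by (rule C'_mixed[OF xa b(1)])
      qed
    next
      assume "\<exists>a. a \<in> DD \<and> x = sigma9 a"
      then obtain a where a: "a \<in> DD" "x = sigma9 a" by blast
      from split[OF y] show ?thesis
      proof
        assume ya: "y \<in> confC - DD"
        have "inner y x \<le> 2" unfolding a(2) by (rule C'_mixed[OF ya a(1)])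
        then show ?thesis by (simp add: inner_commute)
      next
        assume "\<exists>b. b \<in> DD \<and> y = sigma9 b"
        then obtain b where b: "b \<in> DD" "y = sigma9 b" by blast
        have "a \<noteq> b" using ne a(2) b(2) by blast
        then have "inner a b \<le> 2" using C_pair a(1) b(1) by blast
        then show ?thesis unfolding a(2) b(2) inner_sigma .
      qed
    qed
  qed
qed

lemma C_kiss: "kissing_configuration confC"
  by (rule kiss_intro[OF C_fin]) (use C_norm C_pair in blast)+

definition x0 :: "real^9" where "x0 = mkv (\<lambda>i. if i \<in> {1,2,4,5} then 1 else 0)"

lemma x0_B: "x0 \<in> Bset {1,2,4,5}"
  unfolding Bset_def x0_def by (simp add: coord_mkv)

lemma tau_1245: "tau ` {1,2,4,5} = {1,3,5,7}"
  by (auto simp: tau_def)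

lemma not_iso: "\<not> isometric_configs confC confC'"
proof
  assume "isometric_configs confC confC'"
  then obtain f where f: "orthogonal_transformation f" "f ` confC = confC'"
    unfolding isometric_configs_def by blast
  have lin: "linear f" using f(1) orthogonal_transformation_linear by blast
  have fam1: "{1,2,4,5} \<in> fam" by (simp add: fam_def)
  have x0C: "x0 \<in> confC" unfolding confC_eq using x0_B fam1 by blast
  have x01: "coord x0 1 = 1" unfolding x0_def using coord_mkv[OF one9] by simp
  let ?y = "sigma9 x0"
  have x0D: "x0 \<in> DD" using x0C x01 by simp
  have "?y \<in> sigma9 ` DD" using x0D by (rule imageI)
  then have "?y \<in> confC'" unfolding confC'_eq by (rule UnI2)
  then have "?y \<in> f ` confC" using f(2) by simp
  then obtain z where z: "z \<in> confC" "?y = f z" by (rule imageE)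
  have "f (-z) \<in> f ` confC" using neg_C[OF z(1)] by (rule imageI)
  then have "f (-z) \<in> confC'" using f(2) by simp
  moreover have "f (-z) = - ?y" using z(2) real_vector.linear_neg[OF lin] by simp
  ultimately have ny: "- ?y \<in> confC'" by simp
  have nyB: "- ?y \<in> Bset {1,3,5,7}" using neg_B[OF sigma_B[OF x0_B]] unfolding tau_1245 .
  have ny1: "coord (- ?y) 1 = -1" using x01 by simp
  have "- ?y \<notin> sigma9 ` DD"
  proof
    assume "- ?y \<in> sigma9 ` DD"
    then obtain a where a: "a \<in> DD" "- ?y = sigma9 a" by (rule imageE)
    then have "coord (- ?y) 1 = 1" by simp
    then show False using ny1 by simp
  qed
  then have "- ?y \<in> confC" using ny unfolding confC'_eq by blast
  then have "- ?y \<in> Aset \<or> (\<exists>S\<in>fam. - ?y \<in> Bset S)" unfolding confC_eq by blast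
  then show False
  proof
    assume "- ?y \<in> Aset" then show False using nyB AB_disj by blast
  next
    assume "\<exists>S\<in>fam. - ?y \<in> Bset S"
    then obtain S where S: "S \<in> fam" "- ?y \<in> Bset S" by blast
    have S9: "S \<subseteq> {1..9}" using fam_props S(1) by blast
    have "S = {1,3,5,7}"
    proof (rule ccontr)
      assume "S \<noteq> {1,3,5,7}"
      then have "Bset S \<inter> Bset {1,3,5,7} = {}" using BB_disj[OF S9] by simp
      then show False using S(2) nyB by blast
    qed
    then show False using fam_no1357 S(1) by blast
  qed
qed

theorem mainTheorem3:
  shows "kissing_configuration confC \<and> kissing_configuration confC' \<and>
         card confC = 306 \<and> card confC' = 306 \<and>
         \<not> isometric_configs confC confC'"
  using C_kiss C'_kiss C_card C'_card not_iso by blast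

end
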